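(* Let $1\le p<2$, $f\in\mathcal H_0$, $u$ the solution of $\partial_tu+\partial J(u)\ni0$, $u(0)=f$, with extinction time $T_{\mathrm{ex}}$, and $w(t):=u(t)/a(t)$ with $a(t)=(1-t/T_{\mathrm{ex}})^{1/(2-p)}$, $0\le t<T_{\mathrm{ex}}$. Assume $T_{\mathrm{ex}}=\frac{\|f\|^{2-p}}{(2-p)\lambda_1}$ and that an asymptotic profile exists, i.e. there are $w_*\in\mathcal H$ and $t_k\nearrow T_{\mathrm{ex}}$ with $w(t_k)\to w_*$ strongly. Then $\Lambda(t)=\lambda_1$ for all $0\le t<T_{\mathrm{ex}}$, and hence $f$ is a ground state.
   Context: $\mathcal H$ is a real Hilbert space with inner product $\langle\cdot,\cdot\rangle$ and norm $\|\cdot\|$. $J:\mathcal H\to\mathbb R\cup\{\infty\}$ is convex, lower semicontinuous, proper, with dense effective domain, and absolutely $p$-homogeneous: $J(cu)=|c|^pJ(u)$ for $c\ne0$, $J(0)=0$. $\partial J(u)=\{\zeta: J(u)+\langle\zeta,v-u\rangle\le J(v)\ \forall v\}$; $\mathcal N(J)=\{u:J(u)=0\}$; $\mathcal H_0:=\mathcal N(J)^\perp\setminus\{0\}$. Rayleigh quotient $R(u):=pJ(u)/\|u\|^p$; standing coercivity assumption $\lambda_1:=\inf_{u\in\mathcal H_0}R(u)>0$; a ground state is a minimizer of $R$ over $\mathcal H_0$. The gradient flow solution (Brezis) is the unique continuous $u:[0,\infty)\to\mathcal H$, Lipschitz on $[\delta,\infty)$ for all $\delta>0$, right-differentiable on $(0,\infty)$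 with $u(0)=f$ and $\partial_t^+u(t)=-\zeta(t)$, $\zeta(t)$ the minimal-norm element of $\partial J(u(t))$. $T_{\mathrm{ex}}:=\inf\{T>0:u(t)=0\ \forall t\ge T\}$. $\Lambda(t):=R(u(t))$ for $0\le t<T_{\mathrm{ex}}$. *)

theory Defs
  imports "HOL-Analysis.Analysis" "HOL-Library.Extended_Real"
begin

text \<open>Functional J on a real Hilbert space, with values in R \<union> {\<infinity>} (as ereal, never -\<infinity>).\<close>

definition convex_fun :: "('a::real_vector \<Rightarrow> ereal) \<Rightarrow> bool" where
  "convex_fun J \<longleftrightarrow> (\<forall>x y. \<forall>t::real. 0 \<le> t \<and> t \<le> 1 \<longrightarrow>
      J ((1 - t) *\<^sub>R x + t *\<^sub>R y) \<le> ereal (1 - t) * J x + ereal t * J y)"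

definition lsc_fun :: "('a::topological_space \<Rightarrow> ereal) \<Rightarrow> bool" where
  "lsc_fun J \<longleftrightarrow> (\<forall>c. closed {u. J u \<le> c})"

definition proper_fun :: "('a \<Rightarrow> ereal) \<Rightarrow> bool" where
  "proper_fun J \<longleftrightarrow> (\<forall>u. J u \<noteq> -\<infinity>) \<and> (\<exists>u. J u \<noteq> \<infinity>)"

definition eff_dom :: "('a \<Rightarrow> ereal) \<Rightarrow> 'a set" where
  "eff_dom J = {u. J u < \<infinity>}"

definition abs_homogeneous :: "real \<Rightarrow> ('a::real_vector \<Rightarrow> ereal) \<Rightarrow> bool" where
  "abs_homogeneous p J \<longleftrightarrow> J 0 = 0 \<and>
      (\<forall>c u. c \<noteq> 0 \<longrightarrow> J (c *\<^sub>R u) = ereal (\<bar>c\<bar> powr p) * J u)"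

definition admissible_J :: "real \<Rightarrow> ('a::{real_inner,complete_space} \<Rightarrow> ereal) \<Rightarrow> bool" where
  "admissible_J p J \<longleftrightarrow> convex_fun J \<and> lsc_fun J \<and> proper_fun J \<and>
      closure (eff_dom J) = UNIV \<and> abs_homogeneous p J"

definition subdiff :: "('a::real_inner \<Rightarrow> ereal) \<Rightarrow> 'a \<Rightarrow> 'a set" where
  "subdiff J u = {\<zeta>. \<forall>v. J u + ereal (inner \<zeta> (v - u)) \<le> J v}"

definition null_set :: "('a \<Rightarrow> ereal) \<Rightarrow> 'a set" where
  "null_set J = {u. J u = 0}"

definition H0 :: "('a::real_inner \<Rightarrow> ereal) \<Rightarrow> 'a set" where
  "H0 J = {u. \<forall>v \<in> null_set J. inner u v = 0} - {0}"

definition rayleigh :: "real \<Rightarrow> ('a::real_normed_vector \<Rightarrow> ereal) \<Rightarrow> 'a \<Rightarrow> ereal" where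
  "rayleigh p J u = ereal p * J u / ereal (norm u powr p)"

definition lambda1 :: "real \<Rightarrow> ('a::real_inner \<Rightarrow> ereal) \<Rightarrow> ereal" where
  "lambda1 p J = (INF u \<in> H0 J. rayleigh p J u)"

definition ground_state :: "real \<Rightarrow> ('a::real_inner \<Rightarrow> ereal) \<Rightarrow> 'a \<Rightarrow> bool" where
  "ground_state p J u \<longleftrightarrow> u \<in> H0 J \<and> (\<forall>v \<in> H0 J. rayleigh p J u \<le> rayleigh p J v)"

text \<open>Brezis gradient-flow solution of  u' + \<partial>J(u) \<ni> 0, u(0) = f.\<close>
definition gradient_flow :: "('a::{real_inner,complete_space} \<Rightarrow> ereal) \<Rightarrow> 'a \<Rightarrow> (real \<Rightarrow> 'a) \<Rightarrow> bool" where
  "gradient_flow J f u \<longleftrightarrow>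
     continuous_on {0..} u \<and>
     (\<forall>\<delta>>0. \<exists>C. C-lipschitz_on {\<delta>..} u) \<and>
     u 0 = f \<and>
     (\<forall>t>0. \<exists>\<zeta>. \<zeta> \<in> subdiff J (u t) \<and> (\<forall>\<eta> \<in> subdiff J (u t). norm \<zeta> \<le> norm \<eta>) \<and>
              (u has_vector_derivative (- \<zeta>)) (at_right t))"

text \<open>Extinction time, as an extended real (\<infinity> if u never vanishes identically).\<close>
definition extinction_time :: "(real \<Rightarrow> 'a::zero) \<Rightarrow> ereal" where
  "extinction_time u = (INF T \<in> {T. T > 0 \<and> (\<forall>t\<ge>T. u t = 0)}. ereal T)"

end

theory Submission
  imports Defs
begin


lemma right_deriv_nonpos_aux:
  fixes g :: "real \<Rightarrow> real"
  assumes ab: "a \<le> b" and cont: "continuous_on {a..b} g"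
    and der: "\<And>t. a < t \<Longrightarrow> t < b \<Longrightarrow> \<exists>D. (g has_real_derivative D) (at_right t) \<and> D \<le> 0"
    and k: "k > 0"
  shows "g b \<le> g a + k * (b - a) + k"
proof -
  define h where "h t = g t - g a - k * (t - a) - k" for t
  have conth: "continuous_on {a..b} h" unfolding h_def
    by (intro continuous_intros cont)
  define S where "S = {t \<in> {a..b}. \<forall>s\<in>{a..t}. h s \<le> 0}"
  have aS: "a \<in> S" using ab k by (auto simp: S_def h_def)
  have bdd: "bdd_above S" by (auto simp: S_def bdd_above_def)
  define c where "c = Sup S"
  have ac: "a \<le> c" using aS bdd c_def by (meson cSup_upper)
  have cb: "c \<le> b" unfolding c_def using aS by (intro cSup_least) (auto simp: S_def)
  have below: "h s \<le> 0" if "a \<le> s" "s < c" for s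
  proof -
    have "\<exists>t\<in>S. s < t" using less_cSup_iff[of S s] aS bdd \<open>s < c\<close> unfolding c_def by blast
    then obtain t where "t \<in> S" "s < t" by blast
    then show ?thesis using that by (auto simp: S_def)
  qed
  have hc: "h c \<le> 0"
  proof (cases "c = a")
    case True then show ?thesis using k by (simp add: h_def)
  next
    case False
    then have "a < c" using ac by simp
    have "continuous_on (closure {a..<c}) h"
      using \<open>a < c\<close> cb by (auto intro: continuous_on_subset[OF conth])
    moreover have "c \<in> closure {a..<c}" using \<open>a < c\<close> by simp
    ultimately show ?thesis
      using continuous_le_on_closure[of "{a..<c}" h c 0] below by auto
  qed
  have cS: "c \<in> S"
    using ac cb below hc by (auto simp: S_def) (metis antisym_conv1)
  have "c = b"
  proof (rule ccontr)
    assume "c \<noteq> b"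
    then have "c < b" using cb by simp
    have "\<exists>d>0. \<forall>s. c < s \<and> s < c + d \<longrightarrow> h s \<le> 0"
    proof (cases "c = a")
      case True
      have "h a < 0" using k by (simp add: h_def)
      then obtain d where d: "d > 0" "\<forall>x'\<in>{a..b}. dist x' a < d \<longrightarrow> dist (h x') (h a) < - h a"
        using conth ab unfolding continuous_on_iff by (metis atLeastAtMost_iff neg_0_less_iff_less order_refl)
      show ?thesis
      proof (intro exI[of _ "min d (b - a)"] conjI allI impI)
        show "0 < min d (b - a)" using d \<open>c < b\<close> True by simp
        fix s assume s: "c < s \<and> s < c + min d (b - a)"
        then have "s \<in> {a..b}" "dist s a < d" using True by (auto simp: dist_real_def)
        then have "dist (h s) (h a) < - h a" using d by blast
        then show "h s \<le> 0" by (simp add: dist_real_def)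
      qed
    next
      case False
      then have "a < c" using ac by simp
      obtain D where D: "(g has_real_derivative D) (at_right c)" "D \<le> 0"
        using der[OF \<open>a < c\<close> \<open>c < b\<close>] by blast
      have T: "((\<lambda>y. (g y - g c) / (y - c)) \<longlongrightarrow> D) (at_right c)"
        using D(1) by (simp add: has_field_derivative_iff)
      have "D < k" using D(2) k by simp
      have "eventually (\<lambda>y. (g y - g c) / (y - c) < k) (at_right c)"
        by (rule order_tendstoD(2)[OF T \<open>D < k\<close>])
      then obtain b' where b': "b' > c" "\<And>y. c < y \<Longrightarrow> y < b' \<Longrightarrow> (g y - g c) / (y - c) < k"
        unfolding eventually_at_right_field by blast
      show ?thesis
      proof (intro exI[of _ "b' - c"] conjI allI impI)
        show "0 < b' - c" using b' by simp
        fix s assume s: "c < s \<and> s < c + (b' - c)"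
        then have "(g s - g c) / (s - c) < k" using b' by auto
        then have "g s - g c < k * (s - c)" using s by (simp add: divide_less_eq)
        then show "h s \<le> 0" using hc by (simp add: h_def algebra_simps)
      qed
    qed
    then obtain d where d: "d > 0" "\<And>s. c < s \<Longrightarrow> s < c + d \<Longrightarrow> h s \<le> 0" by blast
    define t where "t = min (c + d/2) b"
    have "t > c" using d \<open>c < b\<close> by (simp add: t_def)
    have "t \<in> S"
    proof -
      have "h s \<le> 0" if "a \<le> s" "s \<le> t" for s
      proof (cases "s \<le> c")
        case True then show ?thesis using cS that by (auto simp: S_def)
      next
        case False then show ?thesis using d that by (auto simp: t_def)
      qed
      then show ?thesis using ac \<open>t > c\<close> by (auto simp: S_def t_def)
    qed
    then have "t \<le> c" unfolding c_def using bdd by (rule cSup_upper)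
    then show False using \<open>t > c\<close> by simp
  qed
  then have "h b \<le> 0" using cS ab by (auto simp: S_def)
  then show ?thesis by (simp add: h_def)
qed

lemma right_deriv_nonpos_mono:
  fixes g :: "real \<Rightarrow> real"
  assumes ab: "a \<le> b" and cont: "continuous_on {a..b} g"
    and der: "\<And>t. a < t \<Longrightarrow> t < b \<Longrightarrow> \<exists>D. (g has_real_derivative D) (at_right t) \<and> D \<le> 0"
  shows "g b \<le> g a"
proof (rule field_le_epsilon)
  fix e :: real assume e: "e > 0"
  define k where "k = e / (b - a + 1)"
  have k: "k > 0" using e ab by (simp add: k_def)
  have 1: "g b \<le> g a + k * (b - a) + k" by (rule right_deriv_nonpos_aux[OF ab cont der k])
  have "k * (b - a) + k = k * (b - a + 1)" by (simp add: algebra_simps)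
  also have "\<dots> = e" using ab by (simp add: k_def)
  finally show "g b \<le> g a + e" using 1 by simp
qed



lemma J_neg: assumes "admissible_J p J" shows "J (- x) = J x"
proof -
  have "J ((-1) *\<^sub>R x) = ereal (\<bar>-1\<bar> powr p) * J x"
    using assms unfolding admissible_J_def abs_homogeneous_def by (metis neg_one_neq_zero) 
  then show ?thesis by simp
qed

lemma J_nonneg: assumes "admissible_J p J" shows "J x \<ge> 0"
proof -
  have cv: "convex_fun J" and h0: "J 0 = 0" and pr: "proper_fun J"
    using assms unfolding admissible_J_def abs_homogeneous_def by auto
  have "J ((1 - 1/2) *\<^sub>R x + (1/2) *\<^sub>R (- x)) \<le> ereal (1 - 1/2) * J x + ereal (1/2) * J (- x)"
    using cv unfolding convex_fun_def by (metis divide_nonneg_nonneg field_sum_of_halves le_add_same_cancel1 zero_le_numeral zero_le_one)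
  then have "0 \<le> ereal (1/2) * J x + ereal (1/2) * J x"
    using J_neg[OF assms, of x] h0 by (simp add: scaleR_right_diff_distrib)
  moreover have "J x \<noteq> -\<infinity>" using pr unfolding proper_fun_def by auto
  ultimately show ?thesis by (cases "J x") auto
qed

lemma J_finite_subdiff:
  assumes "admissible_J p J" "z \<in> subdiff J x"
  shows "\<exists>j. J x = ereal j"
proof -
  have pr: "proper_fun J" using assms unfolding admissible_J_def by auto
  then obtain v where v: "J v \<noteq> \<infinity>" unfolding proper_fun_def by auto
  have "J x + ereal (inner z (v - x)) \<le> J v" using assms(2) unfolding subdiff_def by auto
  moreover have "J x \<noteq> -\<infinity>" using pr unfolding proper_fun_def by auto
  ultimately show ?thesis using v by (cases "J x") auto
qed

lemma J_scale: assumes "admissible_J p J" "J x = ereal j" "c \<noteq> 0"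
  shows "J (c *\<^sub>R x) = ereal (\<bar>c\<bar> powr p * j)"
  using assms unfolding admissible_J_def abs_homogeneous_def by auto

lemma euler:
  assumes hJ: "admissible_J p J" and z: "z \<in> subdiff J x" and j: "J x = ereal j"
  shows "inner z x = p * j"
proof -
  have ineq: "j + (c - 1) * inner z x \<le> c powr p * j" if "c > 0" for c
  proof -
    have "J x + ereal (inner z (c *\<^sub>R x - x)) \<le> J (c *\<^sub>R x)" using z unfolding subdiff_def by auto
    then have "ereal (j + inner z (c *\<^sub>R x - x)) \<le> ereal (c powr p * j)"
      using J_scale[OF hJ j, of c] that j by simp
    then show ?thesis by (simp add: inner_diff_right algebra_simps)
  qed
  have "((\<lambda>y. y powr p) has_real_derivative p * 1 powr (p - 1)) (at 1)"
    by (rule has_real_derivative_powr) simp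
  then have lim: "((\<lambda>y. (y powr p - 1) / (y - 1)) \<longlongrightarrow> p) (at 1)"
    by (simp add: has_field_derivative_iff)
  have limj: "((\<lambda>y. (y powr p - 1) / (y - 1) * j) \<longlongrightarrow> p * j) (at 1)"
    by (intro tendsto_intros lim)
  have "inner z x \<le> p * j"
  proof (rule tendsto_le[OF _ tendsto_mono[OF at_le[OF subset_UNIV] limj] tendsto_const])
    show "at_right (1::real) \<noteq> bot" by simp
    show "\<forall>\<^sub>F y in at_right 1. inner z x \<le> (y powr p - 1) / (y - 1) * j"
      unfolding eventually_at_right_field
    proof (intro exI[of _ 2] conjI allI impI)
      fix y :: real assume "1 < y" "y < 2"
      then have "y - 1 > 0" "y > 0" by auto
      with ineq[OF \<open>y > 0\<close>] show "inner z x \<le> (y powr p - 1) / (y - 1) * j"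
        by (simp add: field_simps)
    qed simp
  qed
  moreover have "inner z x \<ge> p * j"
  proof (rule tendsto_le[OF _ tendsto_const tendsto_mono[OF at_le[OF subset_UNIV] limj]])
    show "at_left (1::real) \<noteq> bot" by simp
    show "\<forall>\<^sub>F y in at_left 1. (y powr p - 1) / (y - 1) * j \<le> inner z x"
      unfolding eventually_at_left_field
    proof (intro exI[of _ 0] conjI allI impI)
      fix y :: real assume "0 < y" "y < 1"
      then have "y - 1 < 0" "y > 0" by auto
      with ineq[OF \<open>y > 0\<close>] show "(y powr p - 1) / (y - 1) * j \<le> inner z x"
        by (simp add: field_simps)
    qed simp
  qed
  ultimately show ?thesis by simp
qed

lemma null_orth:
  assumes hJ: "admissible_J p J" and z: "z \<in> subdiff J x" and j: "J x = ereal j" and v: "J v = 0"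
  shows "inner z v = 0"
proof (rule ccontr)
  assume w: "inner z v \<noteq> 0"
  have cv: "convex_fun J" and h0: "J 0 = 0"
    using hJ unfolding admissible_J_def abs_homogeneous_def by auto
  define B where "B = 2 powr p * j / 2"
  have bound: "j + c * inner z v \<le> B" for c
  proof -
    have "J ((1 - 1/2) *\<^sub>R (2 *\<^sub>R x) + (1/2) *\<^sub>R ((2 * c) *\<^sub>R v))
        \<le> ereal (1 - 1/2) * J (2 *\<^sub>R x) + ereal (1/2) * J ((2 * c) *\<^sub>R v)"
      using cv unfolding convex_fun_def by (metis divide_nonneg_nonneg field_sum_of_halves le_add_same_cancel1 zero_le_numeral zero_le_one)
    moreover have "J ((2 * c) *\<^sub>R v) = 0"
      using J_scale[OF hJ v[unfolded zero_ereal_def], of "2*c"] h0 by (cases "c = 0") auto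
    moreover have "J (2 *\<^sub>R x) = ereal (2 powr p * j)" using J_scale[OF hJ j, of 2] by simp
    moreover have "(1 - 1/2) *\<^sub>R (2 *\<^sub>R x) + (1/2) *\<^sub>R ((2 * c) *\<^sub>R v) = x + c *\<^sub>R v"
      by (simp add: scaleR_scaleR)
    ultimately have 1: "J (x + c *\<^sub>R v) \<le> ereal B" by (simp add: B_def)
    have "J x + ereal (inner z (x + c *\<^sub>R v - x)) \<le> J (x + c *\<^sub>R v)" using z unfolding subdiff_def mem_Collect_eq by blast
    then have 2: "ereal (j + c * inner z v) \<le> J (x + c *\<^sub>R v)" using j by simp
    from order.trans[OF 2 1] show ?thesis by simp
  qed
  have "j + ((\<bar>B - j\<bar> + 1) / inner z v) * inner z v \<le> B" by (rule bound)
  then show False using w by simp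
qed

lemma deriv_inner_sq:
  assumes "(u has_vector_derivative (- z)) (at_right t)"
  shows "((\<lambda>s. inner (u s) (u s)) has_real_derivative (2 * inner (u t) (- z))) (at_right t)"
proof -
  have d: "(u has_derivative (\<lambda>h. h *\<^sub>R (- z))) (at_right t)" using assms by (simp add: has_vector_derivative_def)
  show ?thesis unfolding has_field_derivative_def
    by (rule has_derivative_eq_rhs[OF has_derivative_inner[OF d d]]) (auto simp: inner_commute algebra_simps)
qed

lemma deriv_inner_v:
  assumes "(u has_vector_derivative (- z)) (at_right t)"
  shows "((\<lambda>s. inner (u s) v) has_real_derivative (inner (- z) v)) (at_right t)"
proof -
  have d: "(u has_derivative (\<lambda>h. h *\<^sub>R (- z))) (at_right t)" using assms by (simp add: has_vector_derivative_def)
  show ?thesis unfolding has_field_derivative_def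
    by (rule has_derivative_eq_rhs[OF has_derivative_inner_left[OF d]]) (auto simp: algebra_simps)
qed



theorem proposition6:
  fixes J :: "'a::{real_inner,complete_space} \<Rightarrow> ereal"
    and p :: real and f :: 'a and u :: "real \<Rightarrow> 'a"
  assumes hp: "1 \<le> p" "p < 2"
    and hJ: "admissible_J p J"
    and coercive: "lambda1 p J > 0"
    and hf: "f \<in> H0 J"
    and hu: "gradient_flow J f u"
    and hTex: "extinction_time u = ereal (norm f powr (2 - p)) / (ereal (2 - p) * lambda1 p J)"
    and profile: "\<exists>w_star tk.
        (\<forall>k. 0 \<le> tk k \<and> ereal (tk k) < extinction_time u) \<and> incseq tk \<and>
        (\<lambda>k. ereal (tk k)) \<longlonglongrightarrow> extinction_time u \<and>
        (\<lambda>k. (1 / (1 - tk k / real_of_ereal (extinction_time u)) powr (1 / (2 - p))) *\<^sub>R u (tk k))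
          \<longlonglongrightarrow> w_star"
  shows "(\<forall>t. 0 \<le> t \<and> ereal t < extinction_time u \<longrightarrow> rayleigh p J (u t) = lambda1 p J)
         \<and> ground_state p J f"
proof -
  have cont: "continuous_on {0..} u" and u0: "u 0 = f"
    and flow: "\<And>t. t > 0 \<Longrightarrow> \<exists>\<zeta>. \<zeta> \<in> subdiff J (u t) \<and> (u has_vector_derivative (- \<zeta>)) (at_right t)"
    using hu unfolding gradient_flow_def by blast+
  have f0: "f \<noteq> 0" and forth: "\<And>v. v \<in> null_set J \<Longrightarrow> inner f v = 0" using hf by (auto simp: H0_def)
  define T where "T = extinction_time u"
  obtain tk where tk: "0 \<le> tk 0" "ereal (tk 0) < T" using profile T_def by blast
  have "ereal 0 \<le> ereal (tk 0)" using tk by simp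
  from order_le_less_trans[OF this tk(2)] have Tpos: "0 < T" by (simp add: zero_ereal_def)
  have lfin: "lambda1 p J \<noteq> \<infinity>"
  proof
    assume "lambda1 p J = \<infinity>"
    then have "T = 0" using hTex hp unfolding T_def by simp
    then show False using Tpos by simp
  qed
  obtain L where L: "lambda1 p J = ereal L" "L > 0"
    using coercive lfin by (cases "lambda1 p J") auto
  define nf where "nf = norm f powr (2 - p)"
  have nfpos: "nf > 0" using f0 by (simp add: nf_def)
  define Te where "Te = nf / ((2 - p) * L)"
  have Tepos: "Te > 0" using nfpos L hp by (simp add: Te_def)
  have TTe: "T = ereal Te" using hTex L hp unfolding T_def Te_def nf_def by simp
  have zero_after: "u t = 0" if "t > Te" for t
  proof -
    have "T < ereal t" using that TTe by simp
    then obtain x where "x \<in> {T. T > 0 \<and> (\<forall>t\<ge>T. u t = 0)}" "ereal x < ereal t"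
      unfolding T_def extinction_time_def INF_less_iff by blast
    then show ?thesis by auto
  qed
  have uTe: "u Te = 0"
  proof -
    have "(u \<longlongrightarrow> u Te) (at Te within {0..})" using cont Tepos by (simp add: continuous_on_def)
    then have 1: "(u \<longlongrightarrow> u Te) (at_right Te)" by (rule tendsto_within_subset) (use Tepos in auto)
    have "eventually (\<lambda>t. u t = 0) (at_right Te)"
      unfolding eventually_at_right_field by (intro exI[of _ "Te + 1"]) (auto intro: zero_after)
    then have 2: "(u \<longlongrightarrow> 0) (at_right Te)" by (rule tendsto_eventually)
    show ?thesis using tendsto_unique[OF _ 1 2] by simp
  qed
  obtain z where z: "\<And>t. t > 0 \<Longrightarrow> z t \<in> subdiff J (u t) \<and> (u has_vector_derivative (- z t)) (at_right t)"
    using flow by metis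
  define j where "j t = real_of_ereal (J (u t))" for t
  have Jj: "J (u t) = ereal (j t)" if "t > 0" for t
    using J_finite_subdiff[OF hJ conjunct1[OF z[OF that]]] by (auto simp: j_def)
  have jnn: "j t \<ge> 0" if "t > 0" for t
    using J_nonneg[OF hJ, of "u t"] Jj[OF that] by simp
  have eul: "inner (z t) (u t) = p * j t" if "t > 0" for t
    using euler[OF hJ conjunct1[OF z[OF that]] Jj[OF that]] .
  define N where "N s = inner (u s) (u s)" for s
  have contN: "continuous_on {0..} N" unfolding N_def by (intro continuous_intros cont)
  have dN: "(N has_real_derivative (- (2 * p * j t))) (at_right t)" if "t > 0" for t
  proof -
    have "2 * inner (u t) (- z t) = - (2 * p * j t)" using eul[OF that] by (simp add: inner_commute)
    then show ?thesis using deriv_inner_sq[OF conjunct2[OF z[OF that]]] unfolding N_def by (simp add: mult.assoc)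
  qed
  have Nmono: "N t \<le> N s" if "0 \<le> s" "s \<le> t" for s t
  proof (rule right_deriv_nonpos_mono[OF \<open>s \<le> t\<close>])
    show "continuous_on {s..t} N" using that by (auto intro: continuous_on_subset[OF contN])
    fix \<tau> assume "s < \<tau>" "\<tau> < t"
    then have "\<tau> > 0" using that by simp
    then show "\<exists>D. (N has_real_derivative D) (at_right \<tau>) \<and> D \<le> 0"
      using dN[OF \<open>\<tau> > 0\<close>] jnn[OF \<open>\<tau> > 0\<close>] hp by (intro exI[of _ "- (2 * p * j \<tau>)"]) simp
  qed
  have nonzero: "u t \<noteq> 0" if "0 \<le> t" "t < Te" for t
  proof
    assume ut: "u t = 0"
    then have "t \<noteq> 0" using u0 f0 by auto
    then have "t > 0" using that by simp
    have "u t' = 0" if "t' \<ge> t" for t'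
    proof -
      have "N t' \<le> N t" using Nmono[OF _ that] \<open>t > 0\<close> by simp
      then have "N t' \<le> 0" using ut by (simp add: N_def)
      then show ?thesis by (metis N_def inner_gt_zero_iff not_less)
    qed
    then have "t \<in> {T. T > 0 \<and> (\<forall>t\<ge>T. u t = 0)}" using \<open>t > 0\<close> by auto
    then have "T \<le> ereal t" unfolding T_def extinction_time_def by (rule INF_lower)
    then show False using TTe that by simp
  qed
  have orth_le: "inner (u t) v \<le> 0" if "0 \<le> t" "v \<in> null_set J" for t v
  proof -
    have "(\<lambda>s. inner (u s) v) t \<le> (\<lambda>s. inner (u s) v) 0"
    proof (rule right_deriv_nonpos_mono[OF \<open>0 \<le> t\<close>])
      show "continuous_on {0..t} (\<lambda>s. inner (u s) v)"
        by (intro continuous_intros continuous_on_subset[OF cont]) auto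
      fix \<tau> :: real assume "0 < \<tau>" "\<tau> < t"
      have "inner (z \<tau>) v = 0"
        using null_orth[OF hJ conjunct1[OF z[OF \<open>0 < \<tau>\<close>]] Jj[OF \<open>0 < \<tau>\<close>]] that(2)
        by (simp add: null_set_def)
      then show "\<exists>D. ((\<lambda>s. inner (u s) v) has_real_derivative D) (at_right \<tau>) \<and> D \<le> 0"
        using deriv_inner_v[OF conjunct2[OF z[OF \<open>0 < \<tau>\<close>]], of v] by (intro exI[of _ 0]) simp
    qed
    then show ?thesis using forth[OF that(2)] u0 by simp
  qed
  have inH0: "u t \<in> H0 J" if "0 \<le> t" "t < Te" for t
  proof -
    have "inner (u t) v = 0" if "v \<in> null_set J" for v
    proof -
      have "- v \<in> null_set J" using that J_neg[OF hJ, of v] by (simp add: null_set_def)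
      then show ?thesis using orth_le[OF \<open>0 \<le> t\<close> that] orth_le[OF \<open>0 \<le> t\<close>, of "- v"] by simp
    qed
    then show ?thesis using nonzero[OF that] by (simp add: H0_def)
  qed
  have lower: "lambda1 p J \<le> rayleigh p J x" if "x \<in> H0 J" for x
    unfolding lambda1_def using that by (rule INF_lower)
  have ray: "rayleigh p J (u t) = ereal (p * j t / norm (u t) powr p)" if "0 < t" "t < Te" for t
  proof -
    have "norm (u t) powr p \<noteq> 0" using nonzero[of t] that by simp
    then show ?thesis unfolding rayleigh_def Jj[OF that(1)] by simp
  qed
  have Lle: "L \<le> p * j t / norm (u t) powr p" if "0 < t" "t < Te" for t
    using lower[OF inH0[of t]] ray[OF that] L that by simp
  have Nnorm: "N s powr a = norm (u s) powr (2 * a)" for s a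
  proof -
    have "N s = norm (u s) powr 2" by (simp add: N_def power2_norm_eq_inner)
    then show ?thesis by (simp only: powr_powr)
  qed
  define \<psi> where "\<psi> s = N s powr ((2 - p) / 2) + (2 - p) * L * s" for s
  have d\<psi>: "(\<psi> has_real_derivative ((2 - p) * (L - p * j t / norm (u t) powr p))) (at_right t)"
    if "0 < t" "t < Te" for t
  proof -
    have Npos: "N t > 0" using nonzero[of t] that by (simp add: N_def)
    have 1: "((\<lambda>s. N s powr ((2 - p) / 2)) has_real_derivative
        ((2 - p) / 2 * N t powr ((2 - p) / 2 - 1) * (- (2 * p * j t)))) (at_right t)"
      by (rule has_real_derivative_powr[THEN DERIV_chain2, OF Npos dN[OF that(1)]])
    have 2: "((\<lambda>s. (2 - p) * L * s) has_real_derivative (2 - p) * L) (at_right t)"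
      by (auto intro!: derivative_eq_intros)
    have "N t powr ((2 - p) / 2 - 1) = 1 / norm (u t) powr p"
    proof -
      have "2 * ((2 - p) / 2 - 1) = - p" by (simp add: field_simps)
      then show ?thesis unfolding Nnorm by (simp add: powr_minus_divide)
    qed
    moreover have "norm (u t) powr p > 0" using nonzero[of t] that by simp
    ultimately have "(2 - p) / 2 * N t powr ((2 - p) / 2 - 1) * (- (2 * p * j t)) + (2 - p) * L
        = (2 - p) * (L - p * j t / norm (u t) powr p)" by (simp add: field_simps)
    then show ?thesis using DERIV_add[OF 1 2] unfolding \<psi>_def by simp
  qed
  have cont\<psi>: "continuous_on {0..Te} \<psi>"
    unfolding \<psi>_def using hp
    by (intro continuous_intros continuous_on_powr' continuous_on_subset[OF contN])
       (auto simp: N_def)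
  have two: "2 * ((2 - p) / 2) = 2 - p" by simp
  have \<psi>0: "\<psi> 0 = nf" unfolding \<psi>_def nf_def using Nnorm[of 0 "(2 - p) / 2"] u0 unfolding two by simp
  have \<psi>Te: "\<psi> Te = nf" unfolding \<psi>_def using uTe hp L by (simp add: N_def Te_def)
  have \<psi>dec: "\<psi> b \<le> \<psi> a" if "0 \<le> a" "a \<le> b" "b \<le> Te" for a b
  proof (rule right_deriv_nonpos_mono[OF \<open>a \<le> b\<close>])
    show "continuous_on {a..b} \<psi>" using that by (auto intro: continuous_on_subset[OF cont\<psi>])
    fix \<tau> assume "a < \<tau>" "\<tau> < b"
    then have \<tau>: "0 < \<tau>" "\<tau> < Te" using that by auto
    show "\<exists>D. (\<psi> has_real_derivative D) (at_right \<tau>) \<and> D \<le> 0"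
      using d\<psi>[OF \<tau>] Lle[OF \<tau>] hp by (intro exI[of _ "(2 - p) * (L - p * j \<tau> / norm (u \<tau>) powr p)"]) (simp add: mult_nonneg_nonpos)
  qed
  have \<psi>const: "\<psi> t = nf" if "0 \<le> t" "t \<le> Te" for t
    using \<psi>dec[of 0 t] \<psi>dec[of t Te] that \<psi>0 \<psi>Te by simp
  have eqL: "p * j t / norm (u t) powr p = L" if "0 < t" "t < Te" for t
  proof -
    have "((\<lambda>y. (\<psi> y - \<psi> t) / (y - t)) \<longlongrightarrow> (2 - p) * (L - p * j t / norm (u t) powr p)) (at_right t)"
      using d\<psi>[OF that] by (simp add: has_field_derivative_iff)
    moreover have "eventually (\<lambda>y. (\<psi> y - \<psi> t) / (y - t) = 0) (at_right t)"
      unfolding eventually_at_right_field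
      by (intro exI[of _ Te]) (use that \<psi>const in auto)
    then have "((\<lambda>y. (\<psi> y - \<psi> t) / (y - t)) \<longlongrightarrow> 0) (at_right t)" by (rule tendsto_eventually)
    ultimately have "(2 - p) * (L - p * j t / norm (u t) powr p) = 0"
      by (rule tendsto_unique[rotated]) simp
    then show ?thesis using hp by simp
  qed
  have main1: "rayleigh p J (u t) = lambda1 p J" if "0 < t" "t < Te" for t
    using ray[OF that] eqL[OF that] L by simp
  define m where "m = L * norm f powr p / p"
  have Jf: "J f \<le> ereal m"
  proof (rule ereal_le_epsilon2)
    fix e :: real assume e: "e > 0"
    have lsc: "closed {x. J x \<le> ereal (m + e)}" using hJ unfolding admissible_J_def lsc_fun_def by blast
    have ulim: "(u \<longlongrightarrow> f) (at_right 0)"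
    proof -
      have "(u \<longlongrightarrow> u 0) (at 0 within {0..})" using cont by (simp add: continuous_on_def)
      then have "(u \<longlongrightarrow> u 0) (at_right 0)" by (rule tendsto_within_subset) auto
      then show ?thesis using u0 by simp
    qed
    have "((\<lambda>s. L * norm (u s) powr p / p) \<longlongrightarrow> m) (at_right 0)"
      unfolding m_def using f0 hp by (intro tendsto_intros ulim) auto
    then have ev1: "eventually (\<lambda>s. L * norm (u s) powr p / p < m + e) (at_right 0)"
      using e by (intro order_tendstoD(2)) auto
    have ev2: "eventually (\<lambda>s. 0 < s \<and> s < Te) (at_right (0::real))"
      unfolding eventually_at_right_field by (intro exI[of _ Te]) (use Tepos in auto)
    have "eventually (\<lambda>s. u s \<in> {x. J x \<le> ereal (m + e)}) (at_right 0)"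
      using ev1 ev2
    proof eventually_elim
      case (elim s)
      then have "j s = L * norm (u s) powr p / p" using eqL[of s] hp nonzero[of s]
        by (simp add: field_simps)
      then show ?case using Jj[of s] elim by simp
    qed
    from Lim_in_closed_set[OF lsc this _ ulim] show "J f \<le> ereal m + ereal e" by simp
  qed
  have rf: "rayleigh p J f = lambda1 p J"
  proof (rule antisym)
    show "lambda1 p J \<le> rayleigh p J f" using lower[OF hf] .
    obtain jf where jf: "J f = ereal jf" using Jf J_nonneg[OF hJ, of f] by (cases "J f") auto
    have "jf \<le> m" using Jf jf by simp
    then have "p * jf / norm f powr p \<le> p * m / norm f powr p"
      using hp by (intro divide_right_mono mult_left_mono) auto
    also have "\<dots> = L" using hp f0 by (simp add: m_def)
    finally show "rayleigh p J f \<le> lambda1 p J"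
      unfolding rayleigh_def jf L using f0 by simp
  qed
  show ?thesis
  proof
    show "\<forall>t. 0 \<le> t \<and> ereal t < extinction_time u \<longrightarrow> rayleigh p J (u t) = lambda1 p J"
    proof (intro allI impI)
      fix t assume t: "0 \<le> t \<and> ereal t < extinction_time u"
      then have "t < Te" using TTe T_def by simp
      show "rayleigh p J (u t) = lambda1 p J"
      proof (cases "t = 0")
        case True then show ?thesis using rf u0 by simp
      next
        case False then show ?thesis using main1 t \<open>t < Te\<close> by simp
      qed
    qed
    show "ground_state p J f" unfolding ground_state_def using hf rf lower by simp
  qed
qed

end
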